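(* Let $\xi\in\mathbb{R}$ be transcendental over $\mathbb{Q}$ (i.e. $\xi\notin\overline{\mathbb{Q}}$), and let $k,n$ be integers with $2\le k\le n$. Then \[ \lambda_n(\xi)\ge \frac{\omega_k(\xi)-n+k}{(k-1)\,\omega_k(\xi)+n}. \]
   Context: For a polynomial $P\in\mathbb{Z}[x]$, $\|P\|$ denotes the largest absolute value of its coefficients. For $\xi\in\mathbb{R}$ and an integer $k\ge 1$, $\omega_k(\xi)$ is the supremum of all $\omega\in\mathbb{R}$ for which there exist infinitely many non-zero polynomials $P\in\mathbb{Z}[x]$ of degree at most $k$ with $|P(\xi)|\le\|P\|^{-\omega}$. For an integer $n\ge1$, $\lambda_n(\xi)$ is the supremum of all $\lambda\in\mathbb{R}$ for which there exist infinitely many non-zero points $\mathbf{x}=(x_0,\dots,x_n)\in\mathbb{Z}^{n+1}$ such that $\max_{1\le m\le n}|x_0\xi^m-x_m|\le\|\mathbf{x}\|^{-\lambda}$, where $\|\mathbf{x}\|$ is the maximum norm of $\mathbf{x}$. *)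

theory Defs
  imports "HOL-Analysis.Analysis" "HOL-Computational_Algebra.Polynomial"
begin

definition poly_height :: "int poly \<Rightarrow> int" where
  "poly_height P = Max (insert 0 {\<bar>coeff P i\<bar> | i. i \<le> degree P})"

definition omega_exp :: "nat \<Rightarrow> real \<Rightarrow> ereal" where
  "omega_exp k \<xi> = Sup (ereal ` {\<omega>::real. infinite {P::int poly. P \<noteq> 0 \<and> degree P \<le> k \<and>
      \<bar>poly (map_poly of_int P) \<xi>\<bar> \<le> real_of_int (poly_height P) powr (-\<omega>)}})"

text \<open>Maximum norm of an integer point (x_0,...,x_n), represented as a function nat => int
  vanishing above n.\<close>
definition pt_norm :: "nat \<Rightarrow> (nat \<Rightarrow> int) \<Rightarrow> int" where
  "pt_norm n x = Max {\<bar>x i\<bar> | i. i \<le> n}"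

definition lambda_exp :: "nat \<Rightarrow> real \<Rightarrow> ereal" where
  "lambda_exp n \<xi> = Sup (ereal ` {l::real. infinite {x::nat \<Rightarrow> int.
      (\<forall>i>n. x i = 0) \<and> x \<noteq> (\<lambda>_. 0) \<and>
      (\<forall>m\<in>{1..n}. \<bar>real_of_int (x 0) * \<xi> ^ m - real_of_int (x m)\<bar>
          \<le> real_of_int (pt_norm n x) powr (-l))}})"

end

theory Submission
  imports Defs
begin
lemma height_fin: "finite {\<bar>coeff P i\<bar> | i. i \<le> degree P}"
  by simp

lemma coeff_le_height: "\<bar>coeff P i\<bar> \<le> poly_height P"
proof (cases "i \<le> degree P")
  case True
  then show ?thesis unfolding poly_height_def
    by (intro Max_ge) auto
next
  case False
  then have "coeff P i = 0" by (simp add: coeff_eq_0)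
  moreover have "0 \<le> poly_height P" unfolding poly_height_def by (intro Max_ge) auto
  ultimately show ?thesis by simp
qed

lemma height_nonneg: "0 \<le> poly_height P"
  unfolding poly_height_def by (intro Max_ge) auto

lemma height_ge1: assumes "P \<noteq> 0" shows "1 \<le> poly_height P"
proof -
  have "coeff P (degree P) \<noteq> 0" using assms by simp
  then have "1 \<le> \<bar>coeff P (degree P)\<bar>" by linarith
  then show ?thesis using coeff_le_height[of P "degree P"] by linarith
qed

lemma height_le: assumes "\<And>i. \<bar>coeff P i\<bar> \<le> B" "0 \<le> B" shows "poly_height P \<le> B"
  unfolding poly_height_def using assms by (intro Max.boundedI) auto

lemma finite_bounded_polys: "finite {P :: int poly. degree P \<le> k \<and> poly_height P \<le> B}"
proof -
  let ?S = "{P :: int poly. degree P \<le> k \<and> poly_height P \<le> B}"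
  let ?f = "\<lambda>P::int poly. map (coeff P) [0..<Suc k]"
  have inj: "inj_on ?f ?S"
  proof (rule inj_onI)
    fix P Q assume P: "P \<in> ?S" and Q: "Q \<in> ?S" and eq: "?f P = ?f Q"
    show "P = Q"
    proof (rule poly_eqI)
      fix i show "coeff P i = coeff Q i"
      proof (cases "i \<le> k")
        case True
        then show ?thesis using eq unfolding map_eq_conv by auto
      next
        case False
        then show ?thesis using P Q by (simp add: coeff_eq_0)
      qed
    qed
  qed
  have cb: "coeff P i \<in> {-B..B}" if "P \<in> ?S" for P i
    using that coeff_le_height[of P i] by (auto simp: abs_le_iff)
  have sub: "?f ` ?S \<subseteq> {xs. set xs \<subseteq> {-B..B} \<and> length xs = Suc k}"
    using cb by auto
  have "finite {xs. set xs \<subseteq> {-B..B} \<and> length xs = Suc k}"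
    by (intro finite_lists_length_eq) auto
  then have "finite (?f ` ?S)" using sub finite_subset by blast
  then show ?thesis using inj finite_image_iff by blast
qed

definition lagr :: "nat \<Rightarrow> nat \<Rightarrow> real poly" where
  "lagr k t = smult (inverse (\<Prod>u\<in>{0..k}-{t}. (real t - real u))) (\<Prod>u\<in>{0..k}-{t}. [:- real u, 1:])"

lemma lagr_degree: "t \<le> k \<Longrightarrow> degree (lagr k t) \<le> k"
proof -
  assume "t \<le> k"
  have "degree (\<Prod>u\<in>{0..k}-{t}. [:- real u, 1:]) \<le> sum (degree \<circ> (\<lambda>u. [:- real u, 1:])) ({0..k}-{t})"
    by (rule degree_prod_sum_le) auto
  also have "\<dots> = card ({0..k}-{t})" by simp
  also have "\<dots> \<le> k" using \<open>t \<le> k\<close> by simp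
  finally show ?thesis unfolding lagr_def using degree_smult_le order_trans by blast
qed

lemma lagr_poly: assumes "t \<le> k" "s \<le> k" shows "poly (lagr k t) (real s) = (if s = t then 1 else 0)"
proof (cases "s = t")
  case True
  have "(\<Prod>u\<in>{0..k}-{t}. (real t - real u)) \<noteq> 0" by (auto simp: prod_zero_iff)
  then show ?thesis using True by (simp add: lagr_def poly_prod)
next
  case False
  then have "s \<in> {0..k}-{t}" using assms by auto
  then have "(\<Prod>u\<in>{0..k}-{t}. poly [:- real u, 1:] (real s)) = 0"
    by (intro prod_zero) auto
  then show ?thesis using False by (simp add: lagr_def poly_prod)
qed

lemma lagr_expand:
  fixes p :: "real poly"
  assumes "degree p \<le> k"
  shows "p = (\<Sum>t\<in>{0..k}. smult (poly p (real t)) (lagr k t))"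
proof (rule poly_eqI_degree[of "real ` {0..k}"])
  fix x assume "x \<in> real ` {0..k}"
  then obtain s where s: "s \<le> k" "x = real s" by auto
  have "poly (\<Sum>t\<in>{0..k}. smult (poly p (real t)) (lagr k t)) x
      = (\<Sum>t\<in>{0..k}. poly p (real t) * (if s = t then 1 else 0))"
    using s by (auto simp: poly_sum lagr_poly intro!: sum.cong)
  also have "\<dots> = poly p x" using s by (simp add: if_distrib sum.delta cong: if_cong)
  finally show "poly p x = poly (\<Sum>t\<in>{0..k}. smult (poly p (real t)) (lagr k t)) x" by simp
next
  have "card (real ` {0..k}) = Suc k" by (simp add: card_image)
  then show "degree p < card (real ` {0..k})" using assms by simp
  have "degree (\<Sum>t\<in>{0..k}. smult (poly p (real t)) (lagr k t)) \<le> k"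
    by (intro degree_sum_le) (auto intro: order_trans[OF degree_smult_le] lagr_degree)
  then show "degree (\<Sum>t\<in>{0..k}. smult (poly p (real t)) (lagr k t)) < card (real ` {0..k})"
    using \<open>card _ = Suc k\<close> by simp
qed

lemma interp_bound:
  fixes k :: nat
  defines "C \<equiv> 1 + (\<Sum>t\<in>{0..k}. \<Sum>i\<in>{0..k}. \<bar>coeff (lagr k t) i\<bar>)"
  assumes "degree p \<le> k" "\<And>t. t \<le> k \<Longrightarrow> \<bar>poly p (real t)\<bar> \<le> M"
  shows "\<bar>coeff p i\<bar> \<le> C * M" "C > 0"
proof -
  have M0: "0 \<le> M" using assms(3)[of 0] by simp
  have Cge: "C \<ge> 1" unfolding C_def by (simp add: sum_nonneg)
  then show "C > 0" by simp
  show "\<bar>coeff p i\<bar> \<le> C * M"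
  proof (cases "i \<le> k")
    case False
    then have "coeff p i = 0" using assms(2) by (simp add: coeff_eq_0)
    then show ?thesis using M0 Cge by simp
  next
    case True
    have "coeff p i = (\<Sum>t\<in>{0..k}. poly p (real t) * coeff (lagr k t) i)"
      by (subst lagr_expand[OF assms(2)]) (simp add: coeff_sum)
    also have "\<bar>\<dots>\<bar> \<le> (\<Sum>t\<in>{0..k}. \<bar>poly p (real t) * coeff (lagr k t) i\<bar>)"
      by (rule sum_abs)
    also have "\<dots> \<le> (\<Sum>t\<in>{0..k}. M * \<bar>coeff (lagr k t) i\<bar>)"
      by (intro sum_mono) (auto simp: abs_mult intro!: mult_right_mono assms(3))
    also have "\<dots> = M * (\<Sum>t\<in>{0..k}. \<bar>coeff (lagr k t) i\<bar>)" by (simp add: sum_distrib_left)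
    also have "(\<Sum>t\<in>{0..k}. \<bar>coeff (lagr k t) i\<bar>) \<le> (\<Sum>t\<in>{0..k}. \<Sum>i\<in>{0..k}. \<bar>coeff (lagr k t) i\<bar>)"
      using True by (intro sum_mono member_le_sum) auto
    then have "M * (\<Sum>t\<in>{0..k}. \<bar>coeff (lagr k t) i\<bar>) \<le> M * C"
      unfolding C_def using M0 by (intro mult_left_mono) auto
    finally show ?thesis by (simp add: mult.commute)
  qed
qed

lemma poly_sum_k:
  fixes R :: "int poly" and x :: real
  assumes "degree R \<le> k"
  shows "poly (map_poly real_of_int R) x = (\<Sum>i\<le>k. real_of_int (coeff R i) * x ^ i)"
proof -
  have "poly (map_poly real_of_int R) x = (\<Sum>i\<le>degree (map_poly real_of_int R). coeff (map_poly real_of_int R) i * x ^ i)"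
    by (rule poly_altdef)
  also have "\<dots> = (\<Sum>i\<le>k. coeff (map_poly real_of_int R) i * x ^ i)"
  proof (rule sum.mono_neutral_left)
    show "\<forall>i\<in>{..k} - {..degree (map_poly real_of_int R)}. coeff (map_poly real_of_int R) i * x ^ i = 0"
      by (auto simp: coeff_eq_0)
  qed (use assms in \<open>auto simp: degree_map_poly\<close>)
  also have "\<dots> = (\<Sum>i\<le>k. real_of_int (coeff R i) * x ^ i)" by (simp add: coeff_map_poly)
  finally show ?thesis .
qed

lemma split0: "(\<Sum>i\<le>k. f i) = f 0 + (\<Sum>i\<in>{1..k}. f i)" for f :: "nat \<Rightarrow> 'a::comm_monoid_add"
proof -
  have "{..k} = insert 0 {1..k}" by auto
  then show ?thesis by simp
qed

lemma err_rec:
  fixes \<eta> E1 A :: real and R :: "int poly" and y :: "nat \<Rightarrow> int" and k n :: nat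
  assumes \<eta>0: "\<eta> \<noteq> 0" and k1: "1 \<le> k" and kn: "k \<le> n" and degR: "degree R \<le> k"
    and c0: "coeff R 0 \<noteq> 0" and A: "\<And>i. \<bar>coeff R i\<bar> \<le> A * \<bar>coeff R 0\<bar>"
    and res: "\<And>s. s \<le> n - k \<Longrightarrow> (\<Sum>i\<le>k. coeff R i * y (i + s)) = 0"
    and free: "\<And>m. n - k < m \<Longrightarrow> m \<le> n \<Longrightarrow> \<bar>y n / \<eta>^n * \<eta>^m - y m\<bar> \<le> E1"
  defines "G \<equiv> E1 + \<bar>y n / \<eta>^n\<bar> * max 1 \<bar>\<eta>\<bar> ^ n * \<bar>poly (map_poly real_of_int R) \<eta>\<bar> / \<bar>coeff R 0\<bar>"
  shows "m \<le> n \<Longrightarrow> \<bar>y n / \<eta>^n * \<eta>^m - y m\<bar> \<le> (1 + k*A)^(n-m) * G"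
proof (induction "n - m" arbitrary: m rule: less_induct)
  case less
  define z where "z = y n / \<eta>^n"
  define e where "e i = z * \<eta>^i - y i" for i
  define c where "c i = real_of_int (coeff R i)" for i
  define P where "P = poly (map_poly real_of_int R) \<eta>"
  have c0r: "\<bar>c 0\<bar> > 0" using c0 by (simp add: c_def)
  have cA: "\<bar>c i\<bar> \<le> A * \<bar>c 0\<bar>" for i unfolding c_def using A[of i] by simp
  have A1: "A \<ge> 1"
  proof -
    have "1 * \<bar>c 0\<bar> \<le> A * \<bar>c 0\<bar>" using cA[of 0] by simp
    then show ?thesis using c0r mult_le_cancel_right_pos by blast
  qed
  have E10: "E1 \<ge> 0" using free[of n] k1 kn \<eta>0 by simp
  have G0: "G \<ge> E1" unfolding G_def by (simp add: c0)
  have base: "1 \<le> 1 + real k * A" using A1 by simp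
  show ?case
  proof (cases "n - k < m")
    case True
    have "\<bar>y n / \<eta>^n * \<eta>^m - y m\<bar> \<le> E1" using free True less by simp
    also have "E1 \<le> 1 * G" using G0 by simp
    also have "\<dots> \<le> (1 + k*A)^(n-m) * G" using G0 E10 base
      by (intro mult_right_mono) (simp_all add: one_le_power)
    finally show ?thesis .
  next
    case False
    define s where "s = m"
    have sle: "s \<le> n - k" using False s_def by simp
    have IH: "\<bar>e (i + s)\<bar> \<le> (1 + k*A)^(n-(i+s)) * G" if "1 \<le> i" "i \<le> k" for i
      unfolding e_def z_def using less.hyps[of "i+s"] that sle s_def kn by simp
    have r: "(\<Sum>i\<le>k. c i * (z * \<eta>^(i+s) - e (i+s))) = 0"
    proof -
      have "(\<Sum>i\<le>k. c i * (z * \<eta>^(i+s) - e (i+s))) = (\<Sum>i\<le>k. c i * y (i + s))"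
        unfolding e_def by simp
      also have "\<dots> = real_of_int (\<Sum>i\<le>k. coeff R i * y (i + s))" by (simp add: c_def)
      also have "\<dots> = 0" using res[OF sle] by simp
      finally show ?thesis .
    qed
    have Pk: "P = (\<Sum>i\<le>k. c i * \<eta>^i)" unfolding P_def c_def by (rule poly_sum_k[OF degR])
    have "(\<Sum>i\<le>k. c i * (z * \<eta>^(i+s) - e (i+s))) = (\<Sum>i\<le>k. (z * \<eta>^s) * (c i * \<eta>^i)) - (\<Sum>i\<le>k. c i * e (i+s))"
      unfolding right_diff_distrib sum_subtractf by (simp add: power_add mult_ac)
    also have "\<dots> = z * \<eta>^s * P - (\<Sum>i\<le>k. c i * e (i+s))"
      by (simp only: Pk sum_distrib_left)
    finally have eq0: "z * \<eta>^s * P = (\<Sum>i\<le>k. c i * e (i+s))" using r by simp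
    have eq: "c 0 * e s = z * \<eta>^s * P - (\<Sum>i\<in>{1..k}. c i * e (i+s))"
      using eq0 split0[of "\<lambda>i. c i * e (i+s)" k] by simp
    have b1: "\<bar>z * \<eta>^s * P\<bar> / \<bar>c 0\<bar> \<le> G - E1"
    proof -
      have "\<bar>\<eta>\<bar>^s \<le> max 1 \<bar>\<eta>\<bar> ^ s" by (intro power_mono) auto
      also have "\<dots> \<le> max 1 \<bar>\<eta>\<bar> ^ n" using sle by (intro power_increasing) auto
      finally have "\<bar>z * \<eta>^s * P\<bar> \<le> \<bar>z\<bar> * max 1 \<bar>\<eta>\<bar> ^ n * \<bar>P\<bar>"
        by (simp add: abs_mult power_abs mult_left_mono mult_right_mono)
      then have "\<bar>z * \<eta>^s * P\<bar> / \<bar>c 0\<bar> \<le> \<bar>z\<bar> * max 1 \<bar>\<eta>\<bar> ^ n * \<bar>P\<bar> / \<bar>c 0\<bar>"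
        by (rule divide_right_mono) simp
      then show ?thesis unfolding G_def z_def P_def c_def by simp
    qed
    have b2: "\<bar>(\<Sum>i\<in>{1..k}. c i * e (i+s))\<bar> / \<bar>c 0\<bar> \<le> k * A * (1 + k*A)^(n-s-1) * G"
    proof -
      have "\<bar>(\<Sum>i\<in>{1..k}. c i * e (i+s))\<bar> \<le> (\<Sum>i\<in>{1..k}. \<bar>c i\<bar> * \<bar>e (i+s)\<bar>)"
        by (rule order_trans[OF sum_abs]) (simp add: abs_mult)
      also have "\<dots> \<le> (\<Sum>i\<in>{1..k}. (A * \<bar>c 0\<bar>) * ((1 + k*A)^(n-s-1) * G))"
      proof (intro sum_mono mult_mono)
        fix i assume i: "i \<in> {1..k}"
        show "\<bar>c i\<bar> \<le> A * \<bar>c 0\<bar>" by (rule cA)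
        have "(1 + k*A)^(n-(i+s)) \<le> (1 + k*A)^(n-s-1)"
          using i base by (intro power_increasing) auto
        then show "\<bar>e (i+s)\<bar> \<le> (1 + k*A)^(n-s-1) * G"
          using IH[of i] i G0 E10 by (meson atLeastAtMost_iff mult_right_mono order_trans)
      qed (use A1 G0 E10 base in auto)
      also have "\<dots> = k * (A * \<bar>c 0\<bar>) * ((1 + k*A)^(n-s-1) * G)" by simp
      finally show ?thesis using c0r by (simp add: divide_le_eq mult_ac)
    qed
    have "\<bar>e s\<bar> = \<bar>z * \<eta>^s * P - (\<Sum>i\<in>{1..k}. c i * e (i+s))\<bar> / \<bar>c 0\<bar>"
    proof -
      have "e s = (c 0 * e s) / c 0" using c0r by simp
      then show ?thesis using eq by (metis abs_divide)
    qed
    also have "\<dots> \<le> \<bar>z * \<eta>^s * P\<bar> / \<bar>c 0\<bar> + \<bar>(\<Sum>i\<in>{1..k}. c i * e (i+s))\<bar> / \<bar>c 0\<bar>"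
      by (simp add: add_divide_distrib[symmetric] divide_right_mono abs_triangle_ineq4)
    also have "\<dots> \<le> (G - E1) + k * A * (1 + k*A)^(n-s-1) * G" using b1 b2 by simp
    also have "\<dots> \<le> (1 + k*A)^(n-s-1) * G + k * A * (1 + k*A)^(n-s-1) * G"
    proof -
      have "G \<le> (1 + k*A)^(n-s-1) * G" using G0 E10 base
        by (metis mult_1 mult_right_mono one_le_power order_trans)
      then show ?thesis using E10 by simp
    qed
    also have "\<dots> = (1 + k*A)^(Suc (n-s-1)) * G" by (simp add: algebra_simps)
    also have "Suc (n-s-1) = n - m" using sle k1 kn s_def by simp
    finally show ?thesis unfolding e_def z_def s_def by simp
  qed
qed

lemma exists_reduced:
  fixes R :: "int poly" and f :: "nat \<Rightarrow> int" and n k :: nat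
  assumes c0: "coeff R 0 \<noteq> 0" and k1: "1 \<le> k"
  shows "a \<le> Suc (n-k) \<Longrightarrow> \<exists>v. (\<forall>m>n-k. v m = f m) \<and>
     (\<forall>s. a \<le> s \<and> s \<le> n-k \<longrightarrow> (\<Sum>i\<le>k. coeff R i * v (i+s)) \<in> {0..<\<bar>coeff R 0\<bar>})"
proof (induction "Suc (n-k) - a" arbitrary: a)
  case 0
  then have "a = Suc (n-k)" by simp
  then show ?case by (intro exI[of _ f]) auto
next
  case (Suc d)
  then have a: "a \<le> n - k" "d = Suc (n-k) - Suc a" by auto
  obtain v where v1: "\<forall>m>n-k. v m = f m"
    and v2: "\<forall>s. Suc a \<le> s \<and> s \<le> n-k \<longrightarrow> (\<Sum>i\<le>k. coeff R i * v (i+s)) \<in> {0..<\<bar>coeff R 0\<bar>}"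
    using Suc.hyps(1)[of "Suc a"] a by auto
  define c where "c = coeff R 0"
  define W where "W = (\<Sum>i\<in>{1..k}. coeff R i * v (i+a))"
  define val where "val = - sgn c * (W div \<bar>c\<bar>)"
  define v' where "v' = v(a := val)"
  have cpos: "\<bar>c\<bar> > 0" using c0 c_def by simp
  have "\<forall>m>n-k. v' m = f m" using v1 a by (auto simp: v'_def)
  moreover have "(\<Sum>i\<le>k. coeff R i * v' (i+s)) \<in> {0..<\<bar>coeff R 0\<bar>}" if s: "a \<le> s" "s \<le> n-k" for s
  proof (cases "s = a")
    case False
    then have "(\<Sum>i\<le>k. coeff R i * v' (i+s)) = (\<Sum>i\<le>k. coeff R i * v (i+s))"
      using s by (intro sum.cong) (auto simp: v'_def)
    then show ?thesis using v2 s False by auto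
  next
    case True
    have "{..k} = insert 0 {1..k}" by auto
    then have "(\<Sum>i\<le>k. coeff R i * v' (i+s)) = c * val + (\<Sum>i\<in>{1..k}. coeff R i * v' (i+a))"
      using True by (simp add: c_def v'_def)
    also have "(\<Sum>i\<in>{1..k}. coeff R i * v' (i+a)) = W"
      unfolding W_def by (intro sum.cong) (auto simp: v'_def)
    also have "c * val = - (\<bar>c\<bar> * (W div \<bar>c\<bar>))"
      unfolding val_def by (cases "c > 0") (auto simp: sgn_if)
    also have "- (\<bar>c\<bar> * (W div \<bar>c\<bar>)) + W = W mod \<bar>c\<bar>"
      by (simp add: minus_div_mult_eq_mod[symmetric] mult.commute)
    finally show ?thesis using cpos by (simp add: c_def)
  qed
  ultimately show ?case by blast
qed

lemma core_pigeon:
  fixes \<eta> :: real and R :: "int poly" and n k N :: nat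
  assumes \<eta>0: "\<eta> \<noteq> 0" and k1: "1 \<le> k" and kn: "k \<le> n" and c0: "coeff R 0 \<noteq> 0" and N1: "1 \<le> N"
  shows "\<exists>y::nat\<Rightarrow>int. y n \<noteq> 0 \<and> \<bar>y n\<bar> \<le> int N^(k-1) * \<bar>coeff R 0\<bar>^(Suc (n-k))
     \<and> (\<forall>s\<le>n-k. (\<Sum>i\<le>k. coeff R i * y (i+s)) = 0)
     \<and> (\<forall>m. n-k < m \<longrightarrow> m \<le> n \<longrightarrow> \<bar>y n / \<eta>^n * \<eta>^m - y m\<bar> \<le> 1 / N)"
proof -
  define c where "c = coeff R 0"
  define Q :: nat where "Q = N^(k-1) * nat \<bar>c\<bar>^(Suc (n-k))"
  define f where "f q m = \<lfloor>real q * \<eta>^m / \<eta>^n\<rfloor>" for q :: nat and m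
  define good where "good q v \<longleftrightarrow> (\<forall>m>n-k. v m = f q m) \<and>
     (\<forall>s. 0 \<le> s \<and> s \<le> n-k \<longrightarrow> (\<Sum>i\<le>k. coeff R i * v (i+s)) \<in> {0..<\<bar>c\<bar>})" for q v
  have ex: "\<exists>v. good q v" for q
    unfolding good_def c_def using exists_reduced[OF c0 k1, of 0 n "f q"] by simp
  define V where "V q = (SOME v. good q v)" for q
  have V: "good q (V q)" for q unfolding V_def using ex by (rule someI_ex)
  define \<Phi> where "\<Phi> q = (map (\<lambda>m. \<lfloor>real N * (real q * \<eta>^m / \<eta>^n - V q m)\<rfloor>) [Suc (n-k)..<n],
      map (\<lambda>s. \<Sum>i\<le>k. coeff R i * V q (i+s)) [0..<Suc (n-k)])" for q
  define L1 where "L1 = {xs. set xs \<subseteq> {0..<int N} \<and> length xs = k - 1}"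
  define L2 where "L2 = {xs. set xs \<subseteq> {0..<\<bar>c\<bar>} \<and> length xs = Suc (n-k)}"
  have box: "\<lfloor>real N * (real q * \<eta>^m / \<eta>^n - V q m)\<rfloor> \<in> {0..<int N}" if "n - k < m" for q m
  proof -
    have Vm: "V q m = \<lfloor>real q * \<eta>^m / \<eta>^n\<rfloor>" using V[of q] that unfolding good_def f_def by auto
    define x where "x = real q * \<eta>^m / \<eta>^n"
    have "0 \<le> x - \<lfloor>x\<rfloor>" "x - \<lfloor>x\<rfloor> < 1" by linarith+
    then have "0 \<le> real N * (x - \<lfloor>x\<rfloor>)" "real N * (x - \<lfloor>x\<rfloor>) < real N" using N1 by auto
    then show ?thesis unfolding Vm x_def[symmetric] by (simp add: floor_less_iff)
  qed
  have img: "\<Phi> ` {0..Q} \<subseteq> L1 \<times> L2"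
  proof
    fix p assume "p \<in> \<Phi> ` {0..Q}"
    then obtain q where p: "p = \<Phi> q" by auto
    have "fst p \<in> L1" unfolding p \<Phi>_def L1_def using box k1 kn by auto
    moreover have "snd p \<in> L2" unfolding p \<Phi>_def L2_def using V[of q] unfolding good_def by auto
    ultimately show "p \<in> L1 \<times> L2" by (cases p) auto
  qed
  have cardL: "card (L1 \<times> L2) = Q"
    unfolding L1_def L2_def Q_def card_cartesian_product card_lists_length_eq[OF finite_atLeastLessThan_int]
    by simp
  have finL: "finite (L1 \<times> L2)" unfolding L1_def L2_def
    by (intro finite_cartesian_product finite_lists_length_eq) auto
  have "card (\<Phi> ` {0..Q}) \<le> Q" using card_mono[OF finL img] cardL by simp
  then have "card (\<Phi> ` {0..Q}) < card {0..Q}" by simp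
  then have "\<not> inj_on \<Phi> {0..Q}" by (rule pigeonhole)
  then obtain q q' where qq: "q \<in> {0..Q}" "q' \<in> {0..Q}" "q \<noteq> q'" "\<Phi> q = \<Phi> q'"
    unfolding inj_on_def by blast
  define y where "y m = V q m - V q' m" for m
  have Vn: "V p n = int p" for p
  proof -
    have "V p n = f p n" using V[of p] k1 kn unfolding good_def by auto
    then show ?thesis unfolding f_def using \<eta>0 by simp
  qed
  have yn: "y n = int q - int q'" unfolding y_def Vn by simp
  have "y n \<noteq> 0" using yn qq by simp
  moreover have "\<bar>y n\<bar> \<le> int N^(k-1) * \<bar>coeff R 0\<bar>^(Suc (n-k))"
  proof -
    have "\<bar>y n\<bar> \<le> int Q" using yn qq by auto
    also have "int Q = int N^(k-1) * \<bar>c\<bar>^(Suc (n-k))" unfolding Q_def by simp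
    finally show ?thesis by (simp add: c_def)
  qed
  moreover have "(\<Sum>i\<le>k. coeff R i * y (i+s)) = 0" if s: "s \<le> n-k" for s
  proof -
    have "snd (\<Phi> q) ! s = snd (\<Phi> q') ! s" using qq by simp
    then have "(\<Sum>i\<le>k. coeff R i * V q (i+s)) = (\<Sum>i\<le>k. coeff R i * V q' (i+s))"
      unfolding \<Phi>_def using s by (simp add: nth_map less_Suc_eq_le del: upt_Suc)
    then show ?thesis unfolding y_def by (simp add: right_diff_distrib sum_subtractf)
  qed
  moreover have "\<bar>y n / \<eta>^n * \<eta>^m - y m\<bar> \<le> 1 / N" if m: "n-k < m" "m \<le> n" for m
  proof (cases "m = n")
    case True
    then show ?thesis using \<eta>0 by simp
  next
    case False
    define j where "j = m - Suc (n-k)"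
    have j: "j < length [Suc (n-k)..<n]" "[Suc (n-k)..<n] ! j = m" using m False unfolding j_def by auto
    have "fst (\<Phi> q) ! j = fst (\<Phi> q') ! j" using qq by simp
    then have fl: "\<lfloor>real N * (real q * \<eta>^m / \<eta>^n - V q m)\<rfloor> = \<lfloor>real N * (real q' * \<eta>^m / \<eta>^n - V q' m)\<rfloor>"
      unfolding \<Phi>_def using j by simp
    define d where "d = real q * \<eta>^m / \<eta>^n - V q m"
    define d' where "d' = real q' * \<eta>^m / \<eta>^n - V q' m"
    have "\<bar>real N * d - real N * d'\<bar> < 1" using fl unfolding d_def d'_def by linarith
    then have "real N * \<bar>d - d'\<bar> < 1" by (simp add: right_diff_distrib[symmetric] abs_mult)
    then have lt: "\<bar>d - d'\<bar> < 1 / N" using N1 by (simp add: field_simps)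
    have "y n / \<eta>^n * \<eta>^m - y m = d - d'" unfolding yn y_def d_def d'_def using \<eta>0 by (simp add: Vn diff_divide_distrib algebra_simps)
    then show ?thesis using lt by simp
  qed
  ultimately show ?thesis by blast
qed

lemma map_poly_of_int_add: "map_poly (of_int::int\<Rightarrow>real) (p + q) = map_poly of_int p + map_poly of_int q"
  by (rule poly_eqI) (simp add: coeff_map_poly)

lemma map_poly_of_int_mult: "map_poly (of_int::int\<Rightarrow>real) (p * q) = map_poly of_int p * map_poly of_int q"
  by (rule poly_eqI) (simp add: coeff_mult coeff_map_poly)

lemma poly_of_int_pcompose:
  "poly (map_poly (of_int::int\<Rightarrow>real) (pcompose p q)) x = poly (map_poly of_int p) (poly (map_poly of_int q) x)"
proof (induction p)
  case 0
  then show ?case by simp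
next
  case (pCons a p)
  have "pcompose (pCons a p) q = [:a:] + q * pcompose p q" by (simp add: pcompose_pCons)
  then show ?case using pCons by (simp add: map_poly_of_int_add map_poly_of_int_mult map_poly_pCons)
qed

lemma height_attained: "\<exists>i. poly_height P = \<bar>coeff P i\<bar>"
proof -
  have "poly_height P \<in> insert 0 {\<bar>coeff P i\<bar> | i. i \<le> degree P}"
    unfolding poly_height_def by (intro Max_in) auto
  then show ?thesis
  proof
    assume "poly_height P = 0"
    then show ?thesis by (intro exI[of _ "Suc (degree P)"]) (simp add: coeff_eq_0)
  qed auto
qed

lemma poly_eval_bound:
  fixes P :: "int poly" and v :: real
  assumes "degree P \<le> k" "0 \<le> v"
  shows "\<bar>poly (map_poly real_of_int P) v\<bar> \<le> (real k + 1) * real_of_int (poly_height P) * (1+v)^k"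
proof -
  have "\<bar>poly (map_poly real_of_int P) v\<bar> = \<bar>\<Sum>i\<le>k. real_of_int (coeff P i) * v ^ i\<bar>"
    using poly_sum_k[OF assms(1)] by simp
  also have "\<dots> \<le> (\<Sum>i\<le>k. \<bar>real_of_int (coeff P i) * v ^ i\<bar>)" by (rule sum_abs)
  also have "\<dots> \<le> (\<Sum>i\<le>k. real_of_int (poly_height P) * (1+v)^k)"
  proof (intro sum_mono)
    fix i assume i: "i \<in> {..k}"
    have "\<bar>real_of_int (coeff P i)\<bar> \<le> real_of_int (poly_height P)"
      using coeff_le_height[of P i] by linarith
    moreover have "\<bar>v ^ i\<bar> \<le> (1+v)^k"
    proof -
      have "\<bar>v ^ i\<bar> = v ^ i" using assms by simp
      also have "\<dots> \<le> (1+v)^i" using assms by (intro power_mono) auto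
      also have "\<dots> \<le> (1+v)^k" using i assms by (intro power_increasing) auto
      finally show ?thesis .
    qed
    ultimately show "\<bar>real_of_int (coeff P i) * v ^ i\<bar> \<le> real_of_int (poly_height P) * (1+v)^k"
      by (simp add: abs_mult mult_mono)
  qed
  also have "\<dots> = (real k + 1) * real_of_int (poly_height P) * (1+v)^k" by simp
  finally show ?thesis .
qed

lemma pt_norm_attained: "\<exists>i\<le>n. pt_norm n x = \<bar>x i\<bar>"
proof -
  have "pt_norm n x \<in> {\<bar>x i\<bar> | i. i \<le> n}"
    unfolding pt_norm_def by (intro Max_in) auto
  then show ?thesis by auto
qed

lemma pt_norm_ge: "i \<le> n \<Longrightarrow> \<bar>x i\<bar> \<le> pt_norm n x"
  unfolding pt_norm_def by (intro Max_ge) auto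

lemma binom_expand: "(a + real t)^m = (\<Sum>l\<le>m. real (m choose l) * real t^(m-l) * a^l)"
  by (subst binomial_ring) (simp add: mult_ac)

lemma construct:
  fixes \<xi> A :: real and t k n N :: nat and P :: "int poly"
  defines "\<eta> \<equiv> \<xi> - real t"
  defines "M1 \<equiv> max 1 \<bar>\<eta>\<bar> ^ n"
  defines "D\<eta> \<equiv> M1 / \<bar>\<eta>\<bar>^n"
  defines "Ke \<equiv> (1 + real k * A)^n * D\<eta>"
  defines "K2 \<equiv> (1 + real t)^n * Ke * (M1 + 1)"
  defines "K1 \<equiv> (1 + real t)^n * (D\<eta> + Ke)"
  defines "R \<equiv> pcompose P [:int t, 1:]"
  assumes \<eta>0: "\<eta> \<noteq> 0" and k1: "1 \<le> k" and kn: "k \<le> n" and degP: "degree P \<le> k"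
    and c0: "poly P (int t) \<noteq> 0" and A: "\<And>i. \<bar>coeff R i\<bar> \<le> A * \<bar>poly P (int t)\<bar>" and N1: "1 \<le> N"
  defines "Q \<equiv> real N^(k-1) * \<bar>real_of_int (poly P (int t))\<bar>^(Suc(n-k))"
  defines "G' \<equiv> 1/real N + Q * \<bar>poly (map_poly real_of_int P) \<xi>\<bar> / \<bar>real_of_int (poly P (int t))\<bar>"
  shows "\<exists>x::nat\<Rightarrow>int. (\<forall>i>n. x i = 0) \<and> (x \<noteq> (\<lambda>_. 0) \<or> 1 \<le> K2 * G')
     \<and> real_of_int (pt_norm n x) \<le> K1 * (Q + G')
     \<and> (\<forall>m\<in>{1..n}. \<bar>real_of_int (x 0) * \<xi>^m - x m\<bar> \<le> K2 * G')"
proof -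
  define c where "c = poly P (int t)"
  have degR: "degree R \<le> k"
    unfolding R_def using degree_pcompose_le[of P "[:int t, 1:]"] degP by simp
  have cR: "coeff R 0 = c"
    unfolding c_def R_def poly_0_coeff_0[symmetric] by (simp add: poly_pcompose)
  have c0': "coeff R 0 \<noteq> 0" using cR c0 c_def by simp
  have A': "\<bar>coeff R i\<bar> \<le> A * \<bar>coeff R 0\<bar>" for i using A[of i] cR c_def by simp
  have cpos: "\<bar>real_of_int c\<bar> > 0" using c0 c_def by simp
  have A1: "A \<ge> 1"
  proof -
    have "1 * \<bar>real_of_int c\<bar> \<le> A * \<bar>real_of_int c\<bar>" using A'[of 0] cR by simp
    then show ?thesis using cpos mult_le_cancel_right_pos by blast
  qed
  have N0: "real N > 0" using N1 by simp
  have M1ge: "M1 \<ge> 1" "M1 \<ge> \<bar>\<eta>\<bar>^n" unfolding M1_def by (auto simp: power_mono one_le_power)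
  have etapos: "\<bar>\<eta>\<bar>^n > 0" using \<eta>0 by simp
  have Dge: "D\<eta> \<ge> 1" unfolding D\<eta>_def using M1ge etapos by (simp add: le_divide_eq)
  have Q0: "Q \<ge> 0" unfolding Q_def by simp
  have G'0: "G' \<ge> 0" unfolding G'_def using Q0 by simp
  have Ke0: "Ke \<ge> 0" unfolding Ke_def using Dge A1 by simp
  obtain y where yn: "y n \<noteq> 0" and ynb: "\<bar>y n\<bar> \<le> int N^(k-1) * \<bar>coeff R 0\<bar>^(Suc (n-k))"
    and res: "\<forall>s\<le>n-k. (\<Sum>i\<le>k. coeff R i * y (i+s)) = 0"
    and fr: "\<forall>m. n-k < m \<longrightarrow> m \<le> n \<longrightarrow> \<bar>y n / \<eta>^n * \<eta>^m - y m\<bar> \<le> 1 / N"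
    using core_pigeon[OF \<eta>0 k1 kn c0' N1] by blast
  have ynQ: "\<bar>real_of_int (y n)\<bar> \<le> Q"
  proof -
    have "\<bar>real_of_int (y n)\<bar> \<le> real_of_int (int N^(k-1) * \<bar>coeff R 0\<bar>^(Suc (n-k)))"
      using ynb by linarith
    then show ?thesis unfolding Q_def cR c_def by simp
  qed
  have PR: "poly (map_poly real_of_int R) \<eta> = poly (map_poly real_of_int P) \<xi>"
    unfolding R_def poly_of_int_pcompose by (simp add: \<eta>_def map_poly_pCons)
  define z where "z = y n / \<eta>^n"
  define e where "e m = z * \<eta>^m - y m" for m
  have zb: "\<bar>z\<bar> * M1 \<le> D\<eta> * Q"
  proof -
    have "\<bar>z\<bar> = \<bar>real_of_int (y n)\<bar> / \<bar>\<eta>\<bar>^n" unfolding z_def by (simp add: power_abs)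
    also have "\<dots> \<le> Q / \<bar>\<eta>\<bar>^n" using ynQ etapos by (simp add: divide_right_mono)
    finally have "\<bar>z\<bar> * M1 \<le> Q / \<bar>\<eta>\<bar>^n * M1" using M1ge by (intro mult_right_mono) auto
    then show ?thesis unfolding D\<eta>_def by (simp add: mult_ac)
  qed
  have eb: "\<bar>e m\<bar> \<le> Ke * G'" if m: "m \<le> n" for m
  proof -
    define G where "G = 1 / real N + \<bar>y n / \<eta>^n\<bar> * max 1 \<bar>\<eta>\<bar> ^ n * \<bar>poly (map_poly real_of_int R) \<eta>\<bar> / \<bar>coeff R 0\<bar>"
    have "\<bar>e m\<bar> \<le> (1 + k*A)^(n-m) * G"
      unfolding e_def z_def G_def
      by (rule err_rec[OF \<eta>0 k1 kn degR c0' A']) (use res fr m in auto)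
    also have "(1 + k*A)^(n-m) \<le> (1 + k*A)^n" using A1 by (intro power_increasing) auto
    then have "(1 + k*A)^(n-m) * G \<le> (1 + k*A)^n * G"
      by (intro mult_right_mono) (auto simp: G_def)
    also have "G \<le> D\<eta> * G'"
    proof -
      have "G = 1 / real N + \<bar>z\<bar> * M1 * \<bar>poly (map_poly real_of_int P) \<xi>\<bar> / \<bar>real_of_int c\<bar>"
        unfolding G_def z_def M1_def PR cR by simp
      also have "\<dots> \<le> 1 / real N + D\<eta> * Q * \<bar>poly (map_poly real_of_int P) \<xi>\<bar> / \<bar>real_of_int c\<bar>"
        using zb cpos by (intro add_left_mono divide_right_mono mult_right_mono) auto
      also have "\<dots> \<le> D\<eta> * (1 / real N) + D\<eta> * Q * \<bar>poly (map_poly real_of_int P) \<xi>\<bar> / \<bar>real_of_int c\<bar>"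
        using Dge N0 by (intro add_right_mono) (simp add: le_divide_eq)
      also have "\<dots> = D\<eta> * G'" unfolding G'_def c_def by (simp add: algebra_simps)
      finally show ?thesis .
    qed
    then have "(1 + k*A)^n * G \<le> (1 + k*A)^n * (D\<eta> * G')" using A1 by (intro mult_left_mono) auto
    finally show ?thesis unfolding Ke_def by (simp add: mult_ac)
  qed
  have yl: "\<bar>y 0 * \<eta>^l - y l\<bar> \<le> Ke * G' * (M1 + 1)" if l: "l \<le> n" for l
  proof -
    have "y 0 * \<eta>^l - y l = e l - e 0 * \<eta>^l" unfolding e_def by (simp add: algebra_simps)
    also have "\<bar>\<dots>\<bar> \<le> \<bar>e l\<bar> + \<bar>e 0\<bar> * \<bar>\<eta>\<bar>^l"
      using abs_triangle_ineq4[of "e l" "e 0 * \<eta>^l"] by (simp add: abs_mult power_abs)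
    also have "\<dots> \<le> Ke * G' + Ke * G' * M1"
    proof (intro add_mono mult_mono)
      have "\<bar>\<eta>\<bar>^l \<le> max 1 \<bar>\<eta>\<bar> ^ l" by (intro power_mono) auto
      also have "\<dots> \<le> M1" unfolding M1_def using l by (intro power_increasing) auto
      finally show "\<bar>\<eta>\<bar>^l \<le> M1" .
    qed (use eb l Ke0 G'0 in auto)
    finally show ?thesis by (simp add: algebra_simps)
  qed
  have yabs: "\<bar>real_of_int (y l)\<bar> \<le> (D\<eta> + Ke) * (Q + G')" if l: "l \<le> n" for l
  proof -
    have "real_of_int (y l) = z * \<eta>^l - e l" unfolding e_def by simp
    also have "\<bar>\<dots>\<bar> \<le> \<bar>z\<bar> * \<bar>\<eta>\<bar>^l + \<bar>e l\<bar>"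
      using abs_triangle_ineq4[of "z * \<eta>^l" "e l"] by (simp add: abs_mult power_abs)
    also have "\<dots> \<le> D\<eta> * Q + Ke * G'"
    proof (intro add_mono)
      have "\<bar>\<eta>\<bar>^l \<le> max 1 \<bar>\<eta>\<bar> ^ l" by (intro power_mono) auto
      also have "\<dots> \<le> M1" unfolding M1_def using l by (intro power_increasing) auto
      finally have "\<bar>z\<bar> * \<bar>\<eta>\<bar>^l \<le> \<bar>z\<bar> * M1" by (intro mult_left_mono) auto
      then show "\<bar>z\<bar> * \<bar>\<eta>\<bar>^l \<le> D\<eta> * Q" using zb by linarith
    qed (use eb l in auto)
    also have "\<dots> \<le> (D\<eta> + Ke) * (Q + G')" using Dge Ke0 Q0 G'0 by (simp add: algebra_simps)
    finally show ?thesis .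
  qed
  have yl': "\<bar>y 0 * \<eta>^l - y l\<bar> \<le> Ke * (G' * (M1 + 1))" if l: "l \<le> n" for l
    using yl[OF l] by (simp add: mult.assoc)
  define x where "x m = (if m \<le> n then (\<Sum>l\<le>m. int (m choose l) * int t^(m-l) * y l) else 0)" for m
  have x0: "x 0 = y 0" unfolding x_def by simp
  have sumb: "(\<Sum>l\<le>m. real (m choose l) * real t^(m-l)) = (1 + real t)^m" for m
    using binom_expand[of 1 t m] by (simp add: add.commute)
  have T1: "(1 + real t)^m \<le> (1 + real t)^n" if "m \<le> n" for m using that by (intro power_increasing) auto
  have err: "\<bar>real_of_int (x 0) * \<xi>^m - x m\<bar> \<le> K2 * G'" if m: "m \<in> {1..n}" for m
  proof -
    have "real_of_int (x 0) * \<xi>^m - x m = (\<Sum>l\<le>m. real (m choose l) * real t^(m-l) * (y 0 * \<eta>^l - y l))"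
    proof -
      have "\<xi> = \<eta> + real t" unfolding \<eta>_def by simp
      then have "real_of_int (x 0) * \<xi>^m = (\<Sum>l\<le>m. real (m choose l) * real t^(m-l) * (y 0 * \<eta>^l))"
        unfolding x0 by (simp add: binom_expand sum_distrib_left mult_ac)
      moreover have "real_of_int (x m) = (\<Sum>l\<le>m. real (m choose l) * real t^(m-l) * y l)"
        unfolding x_def using m by simp
      ultimately show ?thesis by (simp add: right_diff_distrib sum_subtractf)
    qed
    also have "\<bar>\<dots>\<bar> \<le> (\<Sum>l\<le>m. real (m choose l) * real t^(m-l) * (Ke * G' * (M1 + 1)))"
      by (rule order_trans[OF sum_abs], intro sum_mono)
         (use m in \<open>auto simp: abs_mult intro!: mult_left_mono yl'\<close>)
    also have "\<dots> = (1 + real t)^m * (Ke * G' * (M1 + 1))" by (simp add: sum_distrib_right[symmetric] sumb)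
    also have "\<dots> \<le> (1 + real t)^n * (Ke * G' * (M1 + 1))"
      using T1 m Ke0 G'0 M1ge by (intro mult_right_mono) auto
    finally show ?thesis unfolding K2_def by (simp add: mult_ac)
  qed
  have xb: "\<bar>real_of_int (x m)\<bar> \<le> K1 * (Q + G')" if m: "m \<le> n" for m
  proof -
    have "\<bar>real_of_int (x m)\<bar> = \<bar>\<Sum>l\<le>m. real (m choose l) * real t^(m-l) * y l\<bar>"
      unfolding x_def using m by simp
    also have "\<dots> \<le> (\<Sum>l\<le>m. real (m choose l) * real t^(m-l) * ((D\<eta> + Ke) * (Q + G')))"
      by (rule order_trans[OF sum_abs], intro sum_mono)
         (use yabs m in \<open>auto simp: abs_mult intro!: mult_left_mono\<close>)
    also have "\<dots> = (1 + real t)^m * ((D\<eta> + Ke) * (Q + G'))" by (simp add: sum_distrib_right[symmetric] sumb)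
    also have "\<dots> \<le> (1 + real t)^n * ((D\<eta> + Ke) * (Q + G'))"
      using T1 m Ke0 G'0 Dge Q0 by (intro mult_right_mono) auto
    finally show ?thesis unfolding K1_def by (simp add: mult_ac)
  qed
  have "\<forall>i>n. x i = 0" unfolding x_def by simp
  moreover have "x \<noteq> (\<lambda>_. 0) \<or> 1 \<le> K2 * G'"
  proof (cases "x = (\<lambda>_. 0)")
    case False then show ?thesis by simp
  next
    case True
    then have "y 0 = 0" using x0 by (metis)
    then have "\<bar>real_of_int (y n)\<bar> \<le> Ke * G' * (M1 + 1)" using yl[of n] by simp
    also have "\<dots> \<le> K2 * G'"
    proof -
      have "1 \<le> (1 + real t)^n" by (simp add: one_le_power)
      then have "1 * (Ke * G' * (M1 + 1)) \<le> (1 + real t)^n * (Ke * G' * (M1 + 1))"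
        using Ke0 G'0 M1ge by (intro mult_right_mono) auto
      then show ?thesis unfolding K2_def by (simp add: mult_ac)
    qed
    finally have "1 \<le> K2 * G'" using yn by linarith
    then show ?thesis by simp
  qed
  moreover have "real_of_int (pt_norm n x) \<le> K1 * (Q + G')"
    using pt_norm_attained[of n x] xb by auto
  ultimately show ?thesis using err by blast
qed

lemma poly_of_int_eval: "poly (map_poly (of_int::int\<Rightarrow>real) P) (of_int z) = of_int (poly P z)"
  by (induction P) (simp_all add: map_poly_pCons)

lemma interp_int:
  fixes k :: nat
  obtains C :: real where "C > 0"
    "\<And>P i M. degree (P::int poly) \<le> k \<Longrightarrow> (\<And>u. u \<le> k \<Longrightarrow> \<bar>real_of_int (poly P (int u))\<bar> \<le> M)
        \<Longrightarrow> \<bar>real_of_int (coeff P i)\<bar> \<le> C * M"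
proof -
  define C where "C = 1 + (\<Sum>t\<in>{0..k}. \<Sum>i\<in>{0..k}. \<bar>coeff (lagr k t) i\<bar>)"
  have "C > 0" unfolding C_def by (simp add: sum_nonneg add_pos_nonneg)
  moreover have "\<bar>real_of_int (coeff P i)\<bar> \<le> C * M"
    if "degree (P::int poly) \<le> k" "\<And>u. u \<le> k \<Longrightarrow> \<bar>real_of_int (poly P (int u))\<bar> \<le> M" for P i M
  proof -
    have "\<bar>coeff (map_poly real_of_int P) i\<bar> \<le> C * M"
      unfolding C_def
    proof (rule interp_bound(1))
      show "degree (map_poly real_of_int P) \<le> k" using that(1) by (simp add: degree_map_poly)
      fix u assume "u \<le> k"
      then show "\<bar>poly (map_poly real_of_int P) (real u)\<bar> \<le> M"
        using that(2)[of u] poly_of_int_eval[of P "int u"] by simp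
    qed
    then show ?thesis by (simp add: coeff_map_poly)
  qed
  ultimately show ?thesis using that by blast
qed

lemma ev_small:
  fixes d C :: real
  assumes "d > 0" "C > 0"
  shows "eventually (\<lambda>h. h powr (-d) < C) at_top"
proof -
  have "((\<lambda>h::real. h powr (-d)) \<longlongrightarrow> 0) at_top"
    using assms(1) by (intro tendsto_neg_powr filterlim_ident) auto
  then show ?thesis using assms(2) by (rule order_tendstoD(2))
qed

definition errsum :: "nat \<Rightarrow> real \<Rightarrow> (nat \<Rightarrow> int) \<Rightarrow> real" where
  "errsum n \<xi> x = (\<Sum>m\<in>{1..n}. \<bar>real_of_int (x 0) * \<xi>^m - real_of_int (x m)\<bar>)"

lemma errsum_pos:
  assumes "\<xi> \<notin> \<rat>" "1 \<le> n" "\<forall>i>n. x i = 0" "x \<noteq> (\<lambda>_. 0)"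
  shows "errsum n \<xi> x > 0"
proof (cases "x 0 = 0")
  case True
  obtain j where "x j \<noteq> 0" using assms(4) by auto
  then have j: "1 \<le> j" "j \<le> n" using True assms(3) by (metis One_nat_def less_one not_less)+
  have "0 < \<bar>real_of_int (x 0) * \<xi>^j - real_of_int (x j)\<bar>" using True \<open>x j \<noteq> 0\<close> by simp
  also have "\<dots> \<le> errsum n \<xi> x" unfolding errsum_def using j
    by (intro member_le_sum) auto
  finally show ?thesis .
next
  case False
  have "real_of_int (x 0) * \<xi> \<noteq> real_of_int (x 1)"
  proof
    assume "real_of_int (x 0) * \<xi> = real_of_int (x 1)"
    then have "\<xi> = real_of_int (x 1) / real_of_int (x 0)" using False by (simp add: field_simps)
    then have "\<xi> \<in> \<rat>" by simp
    then show False using assms(1) by simp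
  qed
  then have "0 < \<bar>real_of_int (x 0) * \<xi>^1 - real_of_int (x 1)\<bar>" by simp
  also have "\<dots> \<le> errsum n \<xi> x" unfolding errsum_def using assms(2)
    by (intro member_le_sum) auto
  finally show ?thesis .
qed

lemma infinite_by_errsum:
  assumes pos: "\<And>x. x \<in> X \<Longrightarrow> errsum n \<xi> x > 0"
    and small: "\<And>\<epsilon>. \<epsilon> > 0 \<Longrightarrow> \<exists>x\<in>X. errsum n \<xi> x < \<epsilon>"
  shows "infinite X"
proof
  assume fin: "finite X"
  obtain x0 where "x0 \<in> X" using small[of 1] by auto
  define \<mu> where "\<mu> = Min (errsum n \<xi> ` X)"
  have "\<mu> \<in> errsum n \<xi> ` X" unfolding \<mu>_def using fin \<open>x0 \<in> X\<close> by (intro Min_in) auto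
  then have "\<mu> > 0" using pos by auto
  then obtain x where "x \<in> X" "errsum n \<xi> x < \<mu>" using small by blast
  moreover have "\<mu> \<le> errsum n \<xi> x" unfolding \<mu>_def using fin \<open>x \<in> X\<close> by (intro Min_le) auto
  ultimately show False by simp
qed

lemma key:
  fixes \<xi> \<omega> l :: real and k n :: nat
  assumes \<xi>: "\<not> algebraic \<xi>" and k1: "1 \<le> k" and kn: "k \<le> n"
    and \<omega>c: "real n - real k < \<omega>"
    and Pinf: "infinite {P::int poly. P \<noteq> 0 \<and> degree P \<le> k \<and>
      \<bar>poly (map_poly of_int P) \<xi>\<bar> \<le> real_of_int (poly_height P) powr (-\<omega>)}"
    and l0: "0 < l" and ll: "l < (\<omega> - real n + real k) / ((real k - 1) * \<omega> + real n)"
  shows "infinite {x::nat\<Rightarrow>int. (\<forall>i>n. x i = 0) \<and> x \<noteq> (\<lambda>_. 0) \<and>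
      (\<forall>m\<in>{1..n}. \<bar>real_of_int (x 0) * \<xi> ^ m - real_of_int (x m)\<bar>
          \<le> real_of_int (pt_norm n x) powr (-l))}" (is "infinite ?X")
proof -
  define SP where "SP = {P::int poly. P \<noteq> 0 \<and> degree P \<le> k \<and>
      \<bar>poly (map_poly of_int P) \<xi>\<bar> \<le> real_of_int (poly_height P) powr (-\<omega>)}"
  obtain Cint where Cint: "Cint > 0" and Cb: "\<And>P i M. degree (P::int poly) \<le> k \<Longrightarrow>
     (\<And>u. u \<le> k \<Longrightarrow> \<bar>real_of_int (poly P (int u))\<bar> \<le> M) \<Longrightarrow> \<bar>real_of_int (coeff P i)\<bar> \<le> Cint * M"
    using interp_int[of k] by blast
  define St where "St t = {P \<in> SP. \<forall>u\<le>k. \<bar>poly P (int u)\<bar> \<le> \<bar>poly P (int t)\<bar>}" for t :: nat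
  have SPU: "SP \<subseteq> (\<Union>t\<in>{..k}. St t)"
  proof
    fix P assume P: "P \<in> SP"
    define mx where "mx = Max ((\<lambda>u. \<bar>poly P (int u)\<bar>) ` {..k})"
    have "mx \<in> (\<lambda>u. \<bar>poly P (int u)\<bar>) ` {..k}" unfolding mx_def by (intro Max_in) auto
    then obtain t where t: "t \<in> {..k}" "mx = \<bar>poly P (int t)\<bar>" by auto
    have "\<bar>poly P (int u)\<bar> \<le> mx" if "u \<le> k" for u unfolding mx_def using that by (intro Max_ge) auto
    then have "\<forall>u\<le>k. \<bar>poly P (int u)\<bar> \<le> \<bar>poly P (int t)\<bar>" using t(2) by auto
    then show "P \<in> (\<Union>t\<in>{..k}. St t)" using P t unfolding St_def by auto
  qed
  obtain t where tk: "t \<le> k" and tinf: "infinite (St t)"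
  proof -
    have "\<exists>t\<in>{..k}. infinite (St t)"
    proof (rule ccontr)
      assume "\<not> (\<exists>t\<in>{..k}. infinite (St t))"
      then have "finite (\<Union>t\<in>{..k}. St t)" by auto
      then have "finite SP" using SPU finite_subset by blast
      then show False using Pinf unfolding SP_def by simp
    qed
    then show ?thesis using that by auto
  qed
  have \<xi>Q: "\<xi> \<notin> \<rat>" using \<xi> rat_imp_algebraic by blast
  define \<eta> where "\<eta> = \<xi> - real t"
  have \<eta>0: "\<eta> \<noteq> 0" using \<xi>Q unfolding \<eta>_def by (metis Rats_of_nat eq_iff_diff_eq_0)
  define B1 where "B1 = (real k + 1) * (1 + real k)^k"
  define A where "A = Cint * (Cint * ((real k + 1) * (1 + 2 * real k)^k))"
  define M1 where "M1 = max 1 \<bar>\<eta>\<bar> ^ n"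
  define D\<eta> where "D\<eta> = M1 / \<bar>\<eta>\<bar>^n"
  define Ke where "Ke = (1 + real k * A)^n * D\<eta>"
  define K2 where "K2 = (1 + real t)^n * Ke * (M1 + 1)"
  define K1 where "K1 = (1 + real t)^n * (D\<eta> + Ke)"
  define b where "b = (\<omega> - real n + real k) / real k"
  define a where "a = b * (real k - 1) + (real n - real k + 1)"
  define cQ where "cQ = 2^(k-1) * B1^(Suc (n-k))"
  define cG where "cG = 1 + cQ * Cint"
  define cE where "cE = K2 * cG"
  define cX where "cX = K1 * (cQ + cG)"
  have kpos: "real k > 0" using k1 by simp
  have b0: "b > 0" unfolding b_def using \<omega>c kpos by simp
  have a_eq: "a = ((real k - 1) * \<omega> + real n) / real k"
    unfolding a_def b_def using kpos by (simp add: field_simps)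
  have den: "(real k - 1) * \<omega> + real n > 0"
  proof -
    have "\<omega> > -1 + 1 * 0" using \<omega>c kn by simp
    have "(real k - 1) * \<omega> \<ge> (real k - 1) * (real n - real k)"
      using \<omega>c k1 by (intro mult_left_mono) auto
    moreover have "(real k - 1) * (real n - real k) + real n > 0"
    proof -
      have "(real k - 1) * (real n - real k) \<ge> 0" using k1 kn by (intro mult_nonneg_nonneg) auto
      moreover have "real n > 0" using k1 kn by simp
      ultimately show ?thesis by linarith
    qed
    ultimately show ?thesis by linarith
  qed
  have a0: "a > 0" unfolding a_eq using den kpos by simp
  have fab: "(\<omega> - real n + real k) / ((real k - 1) * \<omega> + real n) = b / a"
  proof -
    have "\<And>x y. (x / real k) / (y / real k) = x / y" using kpos by (simp add: divide_divide_eq_left divide_divide_eq_right)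
    from this[of "\<omega> - real n + real k" "(real k - 1) * \<omega> + real n"]
    show ?thesis unfolding a_eq b_def by (rule sym)
  qed
  have la: "l * a < b" using ll a0 unfolding fab by (simp add: field_simps)
  have a_om: "a - \<omega> - 1 = - b" unfolding a_def b_def using kpos by (simp add: field_simps)
  have A0: "A > 0" unfolding A_def using Cint by simp
  have M1ge: "M1 \<ge> 1" unfolding M1_def by (simp add: one_le_power)
  have D0: "D\<eta> > 0" unfolding D\<eta>_def using M1ge \<eta>0 by simp
  have Ke0: "Ke > 0" unfolding Ke_def using D0 A0 by (intro mult_pos_pos zero_less_power) (auto simp: add_pos_nonneg)
  have K20: "K2 > 0" unfolding K2_def using Ke0 M1ge by simp
  have K10: "K1 > 0" unfolding K1_def using Ke0 D0 by simp
  have B10: "B1 > 0" unfolding B1_def by simp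
  have cQ0: "cQ > 0" unfolding cQ_def using B10 by simp
  have cG0: "cG > 0" unfolding cG_def using cQ0 Cint by (simp add: add_pos_pos)
  have cE0: "cE > 0" unfolding cE_def using K20 cG0 by simp
  have cX0: "cX > 0" unfolding cX_def using K10 cQ0 cG0 by simp
  have pos: "errsum n \<xi> x > 0" if "x \<in> ?X" for x
    using errsum_pos[OF \<xi>Q] that k1 kn by auto
  have small: "\<exists>x\<in>?X. errsum n \<xi> x < \<epsilon>" if \<epsilon>: "\<epsilon> > 0" for \<epsilon>
  proof -
    have "eventually (\<lambda>h. h powr (-b) < 1 / (K2 * cG)) at_top"
      using b0 K20 cG0 by (intro ev_small) auto
    moreover have "eventually (\<lambda>h. h powr (-(b - a * l)) < 1 / (cE * cX powr l)) at_top"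
      using la cE0 cX0 by (intro ev_small) (auto simp: mult.commute)
    moreover have "eventually (\<lambda>h. h powr (-b) < \<epsilon> / (real n * cE)) at_top"
      using b0 cE0 \<epsilon> k1 kn by (intro ev_small) auto
    moreover have "eventually (\<lambda>h::real. 1 \<le> h) at_top" by (rule eventually_ge_at_top)
    ultimately have "eventually (\<lambda>h. h powr (-b) < 1 / (K2 * cG) \<and>
        h powr (-(b - a * l)) < 1 / (cE * cX powr l) \<and> h powr (-b) < \<epsilon> / (real n * cE) \<and> 1 \<le> h) at_top"
      by eventually_elim auto
    then obtain h0 where h0: "\<And>h. h \<ge> h0 \<Longrightarrow> h powr (-b) < 1 / (K2 * cG) \<and>
        h powr (-(b - a * l)) < 1 / (cE * cX powr l) \<and> h powr (-b) < \<epsilon> / (real n * cE) \<and> 1 \<le> h"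
      unfolding eventually_at_top_linorder by blast
    obtain P where PS: "P \<in> St t" and Ph: "real_of_int (poly_height P) \<ge> h0"
    proof -
      have "\<not> St t \<subseteq> {P :: int poly. degree P \<le> k \<and> poly_height P \<le> \<lceil>h0\<rceil>}"
        using tinf finite_bounded_polys[of k "\<lceil>h0\<rceil>"] finite_subset by blast
      then obtain P where "P \<in> St t" "\<not> poly_height P \<le> \<lceil>h0\<rceil>"
        unfolding St_def SP_def by blast
      moreover have "h0 \<le> real_of_int \<lceil>h0\<rceil>" by (rule le_of_int_ceiling)
      ultimately have "h0 \<le> real_of_int (poly_height P)" by linarith
      then show ?thesis using that \<open>P \<in> St t\<close> by blast
    qed
    define h where "h = real_of_int (poly_height P)"
    have hc: "h powr (-b) < 1 / (K2 * cG)" "h powr (-(b - a * l)) < 1 / (cE * cX powr l)"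
      "h powr (-b) < \<epsilon> / (real n * cE)" "1 \<le> h" using h0[of h] Ph unfolding h_def by auto
    have h0': "h > 0" using hc by simp
    have P0: "P \<noteq> 0" and degP: "degree P \<le> k"
      and P\<xi>: "\<bar>poly (map_poly of_int P) \<xi>\<bar> \<le> h powr (-\<omega>)"
      and tmax: "\<forall>u\<le>k. \<bar>poly P (int u)\<bar> \<le> \<bar>poly P (int t)\<bar>"
      using PS unfolding St_def SP_def h_def by auto
    define c where "c = real_of_int (poly P (int t))"
    have hc1: "h \<le> Cint * \<bar>c\<bar>"
    proof -
      obtain i where "poly_height P = \<bar>coeff P i\<bar>" using height_attained by blast
      then have "h = \<bar>real_of_int (coeff P i)\<bar>" unfolding h_def by simp
      also have "\<dots> \<le> Cint * \<bar>c\<bar>" unfolding c_def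
        by (rule Cb[OF degP]) (use tmax in \<open>simp flip: of_int_abs\<close>)
      finally show ?thesis .
    qed
    have cpos: "\<bar>c\<bar> > 0" using hc1 hc(4) Cint by (cases "c = 0") auto
    then have c0: "poly P (int t) \<noteq> 0" unfolding c_def by auto
    have ch: "h / Cint \<le> \<bar>c\<bar>" using hc1 Cint by (simp add: divide_le_eq mult.commute)
    have hc2: "\<bar>c\<bar> \<le> B1 * h"
    proof -
      have "\<bar>c\<bar> = \<bar>poly (map_poly real_of_int P) (real t)\<bar>"
        unfolding c_def using poly_of_int_eval[of P "int t"] by simp
      also have "\<dots> \<le> (real k + 1) * h * (1 + real t)^k"
        unfolding h_def by (rule poly_eval_bound[OF degP]) simp
      also have "\<dots> \<le> (real k + 1) * h * (1 + real k)^k"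
        using tk hc by (intro mult_left_mono power_mono) auto
      finally show ?thesis unfolding B1_def by (simp add: mult_ac)
    qed
    define R where "R = pcompose P [:int t, 1:]"
    have AR: "\<bar>coeff R i\<bar> \<le> A * \<bar>poly P (int t)\<bar>" for i
    proof -
      have degR: "degree R \<le> k" unfolding R_def using degree_pcompose_le[of P "[:int t, 1:]"] degP by simp
      have "\<bar>real_of_int (coeff R i)\<bar> \<le> Cint * ((real k + 1) * h * (1 + 2 * real k)^k)"
      proof (rule Cb[OF degR])
        fix u assume u: "u \<le> k"
        have "poly R (int u) = poly P (int (u + t))" unfolding R_def by (simp add: poly_pcompose add.commute)
        then have "\<bar>real_of_int (poly R (int u))\<bar> = \<bar>poly (map_poly real_of_int P) (real (u + t))\<bar>"
          using poly_of_int_eval[of P "int (u+t)"] by simp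
        also have "\<dots> \<le> (real k + 1) * h * (1 + real (u + t))^k"
          unfolding h_def by (rule poly_eval_bound[OF degP]) simp
        also have "\<dots> \<le> (real k + 1) * h * (1 + 2 * real k)^k"
          using u tk hc by (intro mult_left_mono power_mono) auto
        finally show "\<bar>real_of_int (poly R (int u))\<bar> \<le> (real k + 1) * h * (1 + 2 * real k)^k" .
      qed
      also have "\<dots> = Cint * ((real k + 1) * (1 + 2 * real k)^k) * h" by (simp add: mult_ac)
      also have "\<dots> \<le> Cint * ((real k + 1) * (1 + 2 * real k)^k) * (Cint * \<bar>c\<bar>)"
        using hc1 Cint by (intro mult_left_mono) auto
      also have "\<dots> = A * \<bar>c\<bar>" unfolding A_def by (simp add: mult_ac)
      finally show ?thesis unfolding c_def by simp
    qed
    define N where "N = nat \<lceil>h powr b\<rceil>"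
    have hb1: "h powr b \<ge> 1" using hc b0 by (intro ge_one_powr_ge_zero) auto
    have N1: "1 \<le> N" unfolding N_def using hb1 by linarith
    have Nge: "real N \<ge> h powr b" unfolding N_def using hb1 by linarith
    have Nle: "real N \<le> 2 * h powr b" unfolding N_def using hb1 by linarith
    define Q where "Q = real N^(k-1) * \<bar>c\<bar>^(Suc(n-k))"
    define G' where "G' = 1/real N + Q * \<bar>poly (map_poly real_of_int P) \<xi>\<bar> / \<bar>c\<bar>"
    obtain x where X1: "\<forall>i>n. x i = 0" and X2: "x \<noteq> (\<lambda>_. 0) \<or> 1 \<le> K2 * G'"
      and X3: "real_of_int (pt_norm n x) \<le> K1 * (Q + G')"
      and X4: "\<forall>m\<in>{1..n}. \<bar>real_of_int (x 0) * \<xi>^m - x m\<bar> \<le> K2 * G'"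
      using construct[where \<xi>=\<xi> and A=A and t=t and k=k and n=n and N=N and P=P, OF _ k1 kn degP c0 _ N1] \<eta>0 AR
      unfolding Q_def G'_def K1_def K2_def Ke_def D\<eta>_def M1_def \<eta>_def R_def c_def by blast
    have Qb: "Q \<le> cQ * h powr a"
    proof -
      have "real N^(k-1) \<le> (2 * h powr b)^(k-1)" using Nle by (intro power_mono) auto
      also have "\<dots> = 2^(k-1) * h powr (real (k-1) * b)"
        using h0' by (simp add: power_mult_distrib powr_power)
      finally have 1: "real N^(k-1) \<le> 2^(k-1) * h powr (real (k-1) * b)" .
      have "\<bar>c\<bar>^(Suc(n-k)) \<le> (B1 * h)^(Suc(n-k))" using hc2 by (intro power_mono) auto
      also have "\<dots> = B1^(Suc(n-k)) * h powr (real (Suc (n-k)))"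
        using h0' by (simp only: power_mult_distrib powr_realpow)
      finally have 2: "\<bar>c\<bar>^(Suc(n-k)) \<le> B1^(Suc(n-k)) * h powr (real (Suc (n-k)))" .
      have "Q \<le> (2^(k-1) * h powr (real (k-1) * b)) * (B1^(Suc(n-k)) * h powr (real (Suc (n-k))))"
        unfolding Q_def using 1 2 by (intro mult_mono) auto
      also have "\<dots> = cQ * (h powr (real (k-1) * b) * h powr (real (Suc (n-k))))"
        unfolding cQ_def by (simp add: mult_ac)
      also have "h powr (real (k-1) * b) * h powr (real (Suc (n-k))) = h powr a"
        unfolding a_def powr_add[symmetric] using k1 kn by (simp add: of_nat_diff algebra_simps)
      finally show ?thesis .
    qed
    have G'b: "G' \<le> cG * h powr (-b)"
    proof -
      have "1 / real N \<le> h powr (-b)"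
        using Nge hb1 unfolding powr_minus_divide by (intro divide_left_mono) (auto intro!: mult_pos_pos)
      moreover have "Q * \<bar>poly (map_poly real_of_int P) \<xi>\<bar> / \<bar>c\<bar> \<le> cQ * Cint * h powr (-b)"
      proof -
        have "Q * \<bar>poly (map_poly real_of_int P) \<xi>\<bar> \<le> (cQ * h powr a) * h powr (-\<omega>)"
          using Qb P\<xi> cQ0 by (intro mult_mono) auto
        then have "Q * \<bar>poly (map_poly real_of_int P) \<xi>\<bar> / \<bar>c\<bar> \<le> (cQ * h powr a) * h powr (-\<omega>) / (h / Cint)"
          using ch h0' Cint cQ0 by (intro frac_le) auto
        also have "\<dots> = cQ * Cint * (h powr a * h powr (-\<omega>) / h)" using Cint by (simp add: field_simps)
        also have "h powr a * h powr (-\<omega>) / h = h powr (a - \<omega> - 1)"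
          using h0' by (simp add: powr_add[symmetric] powr_diff)
        finally show ?thesis unfolding a_om .
      qed
      ultimately show ?thesis unfolding G'_def cG_def by (simp add: algebra_simps)
    qed
    have errb: "K2 * G' \<le> cE * h powr (-b)"
      unfolding cE_def using G'b K20 by (simp add: mult.assoc mult_left_mono)
    have "K2 * cG * h powr (-b) < 1" using hc(1) K20 cG0 by (simp add: field_simps)
    then have xnz: "x \<noteq> (\<lambda>_. 0)" using X2 errb unfolding cE_def by (simp add: mult.assoc)
    have nb: "real_of_int (pt_norm n x) \<le> cX * h powr a"
    proof -
      have "h powr (-b) \<le> 1" using hb1 unfolding powr_minus_divide by (simp add: divide_le_eq)
      also have "1 \<le> h powr a" using hc a0 by (intro ge_one_powr_ge_zero) auto
      finally have "cG * h powr (-b) \<le> cG * h powr a" using cG0 by (intro mult_left_mono) auto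
      then have "G' \<le> cG * h powr a" using G'b by linarith
      then have "K1 * (Q + G') \<le> K1 * (cQ * h powr a + cG * h powr a)"
        using Qb K10 by (intro mult_left_mono add_mono) auto
      then show ?thesis using X3 unfolding cX_def by (simp add: algebra_simps)
    qed
    have n1: "real_of_int (pt_norm n x) \<ge> 1"
    proof -
      obtain j where "x j \<noteq> 0" using xnz by auto
      then have "j \<le> n" using X1 by (meson not_le)
      then have "\<bar>x j\<bar> \<le> pt_norm n x" by (rule pt_norm_ge)
      then show ?thesis using \<open>x j \<noteq> 0\<close> by linarith
    qed
    have keyineq: "cE * h powr (-b) \<le> real_of_int (pt_norm n x) powr (-l)"
    proof -
      have "cE * cX powr l * h powr (-(b - a * l)) < 1"
        using hc(2) cE0 cX0 by (simp add: field_simps)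
      then have F1: "cE * cX powr l * h powr (-(b - a * l)) * (cX powr (-l) * h powr (-(a*l)))
           \<le> 1 * (cX powr (-l) * h powr (-(a*l)))"
        using cX0 h0' by (intro mult_right_mono) auto
      have F2: "cE * cX powr l * h powr (-(b - a * l)) * (cX powr (-l) * h powr (-(a*l)))
           = cE * h powr (-b)"
      proof -
        have "cX powr l * cX powr (-l) = 1" using cX0 by (simp add: powr_minus)
        moreover have "h powr (-(b - a * l)) * h powr (-(a*l)) = h powr (-b)"
          by (simp add: powr_add[symmetric])
        moreover have "cE * cX powr l * h powr (-(b - a * l)) * (cX powr (-l) * h powr (-(a*l)))
            = cE * (cX powr l * cX powr (-l)) * (h powr (-(b - a * l)) * h powr (-(a*l)))" by (simp only: mult_ac)
        ultimately show ?thesis by simp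
      qed
      have F3: "cX powr (-l) * h powr (-(a*l)) = (cX * h powr a) powr (-l)"
        using cX0 h0' by (simp add: powr_mult powr_powr mult.commute)
      have F4: "(cX * h powr a) powr (-l) \<le> real_of_int (pt_norm n x) powr (-l)"
        using nb n1 l0 by (intro powr_mono2') auto
      have "cE * h powr (-b) \<le> 1 * (cX powr (-l) * h powr (-(a*l)))" using F1 unfolding F2 .
      also have "\<dots> = (cX * h powr a) powr (-l)" using F3 by simp
      also have "\<dots> \<le> real_of_int (pt_norm n x) powr (-l)" by (rule F4)
      finally show ?thesis .
    qed
    have xX: "x \<in> ?X" using X1 xnz X4 errb keyineq by (auto intro: order_trans)
    have "errsum n \<xi> x \<le> (\<Sum>m\<in>{1..n}. cE * h powr (-b))"
      unfolding errsum_def using X4 errb by (intro sum_mono) (auto intro: order_trans)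
    also have "\<dots> = real n * cE * h powr (-b)" by simp
    also have "\<dots> < \<epsilon>" using hc(3) cE0 k1 kn by (simp add: field_simps)
    finally show ?thesis using xX by blast
  qed
  show ?thesis by (rule infinite_by_errsum[OF pos small]) auto
qed

lemma ereal_le_from_below:
  fixes z :: ereal
  assumes "\<And>y. y < r \<Longrightarrow> ereal y \<le> z"
  shows "ereal r \<le> z"
proof (rule dense_le)
  fix x assume x: "x < ereal r"
  show "x \<le> z"
  proof (cases x)
    case (real y)
    then show ?thesis using x assms by simp
  next
    case PInf then show ?thesis using x by simp
  next
    case MInf then show ?thesis by simp
  qed
qed

lemma pt_norm_ge1: assumes "\<forall>i>n. x i = 0" "x \<noteq> (\<lambda>_. 0)" shows "1 \<le> pt_norm n x"
proof -
  obtain j where "x j \<noteq> 0" using assms(2) by auto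
  then have "j \<le> n" using assms(1) by (meson not_le)
  then have "\<bar>x j\<bar> \<le> pt_norm n x" by (rule pt_norm_ge)
  then show ?thesis using \<open>x j \<noteq> 0\<close> by linarith
qed

definition LamSet :: "nat \<Rightarrow> real \<Rightarrow> real set" where
  "LamSet n \<xi> = {l::real. infinite {x::nat \<Rightarrow> int.
      (\<forall>i>n. x i = 0) \<and> x \<noteq> (\<lambda>_. 0) \<and>
      (\<forall>m\<in>{1..n}. \<bar>real_of_int (x 0) * \<xi> ^ m - real_of_int (x m)\<bar>
          \<le> real_of_int (pt_norm n x) powr (-l))}}"

definition OmSet :: "nat \<Rightarrow> real \<Rightarrow> real set" where
  "OmSet k \<xi> = {\<omega>::real. infinite {P::int poly. P \<noteq> 0 \<and> degree P \<le> k \<and>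
      \<bar>poly (map_poly of_int P) \<xi>\<bar> \<le> real_of_int (poly_height P) powr (-\<omega>)}}"

lemma lam_down: assumes "l \<in> LamSet n \<xi>" "l' \<le> l" shows "l' \<in> LamSet n \<xi>"
proof -
  have "{x::nat \<Rightarrow> int. (\<forall>i>n. x i = 0) \<and> x \<noteq> (\<lambda>_. 0) \<and>
      (\<forall>m\<in>{1..n}. \<bar>real_of_int (x 0) * \<xi> ^ m - real_of_int (x m)\<bar> \<le> real_of_int (pt_norm n x) powr (-l))}
    \<subseteq> {x::nat \<Rightarrow> int. (\<forall>i>n. x i = 0) \<and> x \<noteq> (\<lambda>_. 0) \<and>
      (\<forall>m\<in>{1..n}. \<bar>real_of_int (x 0) * \<xi> ^ m - real_of_int (x m)\<bar> \<le> real_of_int (pt_norm n x) powr (-l'))}"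
  proof safe
    fix x :: "nat \<Rightarrow> int" and m
    assume x: "\<forall>i>n. x i = 0" "x \<noteq> (\<lambda>_. 0)"
      "\<forall>m\<in>{1..n}. \<bar>real_of_int (x 0) * \<xi> ^ m - real_of_int (x m)\<bar> \<le> real_of_int (pt_norm n x) powr (-l)"
      and m: "m \<in> {1..n}"
    have "1 \<le> real_of_int (pt_norm n x)" using pt_norm_ge1[OF x(1,2)] by simp
    then have "real_of_int (pt_norm n x) powr (-l) \<le> real_of_int (pt_norm n x) powr (-l')"
      using assms(2) by (intro powr_mono) auto
    then show "\<bar>real_of_int (x 0) * \<xi> ^ m - real_of_int (x m)\<bar> \<le> real_of_int (pt_norm n x) powr (-l')"
      using x(3) m by (meson order_trans)
  qed
  then show ?thesis using assms(1) unfolding LamSet_def using infinite_super by blast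
qed

lemma om_down: assumes "\<omega> \<in> OmSet k \<xi>" "\<omega>' \<le> \<omega>" shows "\<omega>' \<in> OmSet k \<xi>"
proof -
  have "{P::int poly. P \<noteq> 0 \<and> degree P \<le> k \<and> \<bar>poly (map_poly of_int P) \<xi>\<bar> \<le> real_of_int (poly_height P) powr (-\<omega>)}
     \<subseteq> {P::int poly. P \<noteq> 0 \<and> degree P \<le> k \<and> \<bar>poly (map_poly of_int P) \<xi>\<bar> \<le> real_of_int (poly_height P) powr (-\<omega>')}"
  proof safe
    fix P :: "int poly" assume P: "P \<noteq> 0" "degree P \<le> k"
      "\<bar>poly (map_poly of_int P) \<xi>\<bar> \<le> real_of_int (poly_height P) powr (-\<omega>)"
    have "1 \<le> real_of_int (poly_height P)" using height_ge1[OF P(1)] by simp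
    then have "real_of_int (poly_height P) powr (-\<omega>) \<le> real_of_int (poly_height P) powr (-\<omega>')"
      using assms(2) by (intro powr_mono) auto
    then show "\<bar>poly (map_poly of_int P) \<xi>\<bar> \<le> real_of_int (poly_height P) powr (-\<omega>')"
      using P(3) by linarith
  qed
  then show ?thesis using assms(1) unfolding OmSet_def using infinite_super by blast
qed

lemma lam0: assumes "1 \<le> n" shows "0 \<in> LamSet n \<xi>"
proof -
  define F where "F q m = (if m \<le> n then round (real q * \<xi>^m) else 0)" for q :: nat and m
  have inj: "inj_on F {1..}"
  proof (rule inj_onI)
    fix q q' assume "F q = F q'"
    then have "F q 0 = F q' 0" by simp
    then show "q = q'" unfolding F_def by simp
  qed
  have mem: "(\<forall>i>n. F q i = 0) \<and> F q \<noteq> (\<lambda>_. 0) \<and>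
      (\<forall>m\<in>{1..n}. \<bar>real_of_int (F q 0) * \<xi> ^ m - real_of_int (F q m)\<bar> \<le> real_of_int (pt_norm n (F q)) powr (-0))"
    if q: "q \<in> {1..}" for q
  proof (intro conjI allI impI ballI)
    show "\<And>i. n < i \<Longrightarrow> F q i = 0" unfolding F_def by simp
    show nz: "F q \<noteq> (\<lambda>_. 0)"
    proof
      assume "F q = (\<lambda>_. 0)"
      then have "F q 0 = 0" by simp
      then show False using q unfolding F_def by simp
    qed
    fix m assume m: "m \<in> {1..n}"
    have "1 \<le> pt_norm n (F q)" by (rule pt_norm_ge1) (use nz in \<open>auto simp: F_def\<close>)
    then have "real_of_int (pt_norm n (F q)) powr (-0) = 1" by simp
    moreover have "\<bar>real_of_int (F q 0) * \<xi> ^ m - real_of_int (F q m)\<bar> \<le> 1"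
    proof -
      have "\<bar>real q * \<xi> ^ m - real_of_int (round (real q * \<xi>^m))\<bar> \<le> 1/2"
        using of_int_round_abs_le[of "real q * \<xi>^m"] by (simp add: abs_minus_commute)
      then show ?thesis unfolding F_def using m by simp
    qed
    ultimately show "\<bar>real_of_int (F q 0) * \<xi> ^ m - real_of_int (F q m)\<bar> \<le> real_of_int (pt_norm n (F q)) powr (-0)"
      by simp
  qed
  have "F ` {1..} \<subseteq> {x::nat \<Rightarrow> int. (\<forall>i>n. x i = 0) \<and> x \<noteq> (\<lambda>_. 0) \<and>
      (\<forall>m\<in>{1..n}. \<bar>real_of_int (x 0) * \<xi> ^ m - real_of_int (x m)\<bar> \<le> real_of_int (pt_norm n x) powr (-0))}"
    by (rule image_subsetI) (use mem in simp)
  moreover have "infinite (F ` {1..})" using inj by (simp add: finite_image_iff infinite_Ici)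
  ultimately have "infinite {x::nat \<Rightarrow> int. (\<forall>i>n. x i = 0) \<and> x \<noteq> (\<lambda>_. 0) \<and>
      (\<forall>m\<in>{1..n}. \<bar>real_of_int (x 0) * \<xi> ^ m - real_of_int (x m)\<bar> \<le> real_of_int (pt_norm n x) powr (-0))}"
    by (rule infinite_super)
  then show ?thesis unfolding LamSet_def by simp
qed

lemma om0: assumes "1 \<le> k" shows "0 \<in> OmSet k \<xi>"
proof -
  define F where "F q = [:- round (real q * \<xi>), int q:]" for q :: nat
  have inj: "inj_on F {1..}"
  proof (rule inj_onI)
    fix q q' assume "F q = F q'"
    then have "coeff (F q) 1 = coeff (F q') 1" by simp
    then show "q = q'" unfolding F_def by simp
  qed
  have mem: "F q \<noteq> 0 \<and> degree (F q) \<le> k \<and>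
      \<bar>poly (map_poly of_int (F q)) \<xi>\<bar> \<le> real_of_int (poly_height (F q)) powr (-0)"
    if q: "q \<in> {1..}" for q
  proof (intro conjI)
    show nz: "F q \<noteq> 0" using q unfolding F_def by simp
    show "degree (F q) \<le> k" unfolding F_def using assms by simp
    have "real_of_int (poly_height (F q)) powr (-0) = 1" using height_ge1[OF nz] by simp
    moreover have "\<bar>poly (map_poly of_int (F q)) \<xi>\<bar> \<le> 1"
    proof -
      have "poly (map_poly (of_int::int\<Rightarrow>real) (F q)) \<xi> = real q * \<xi> - real_of_int (round (real q * \<xi>))"
        unfolding F_def by (simp add: map_poly_pCons)
      moreover have "\<bar>real q * \<xi> - real_of_int (round (real q * \<xi>))\<bar> \<le> 1/2"
        using of_int_round_abs_le[of "real q * \<xi>"] by (simp add: abs_minus_commute)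
      ultimately show ?thesis by simp
    qed
    ultimately show "\<bar>poly (map_poly of_int (F q)) \<xi>\<bar> \<le> real_of_int (poly_height (F q)) powr (-0)" by simp
  qed
  have "F ` {1..} \<subseteq> {P::int poly. P \<noteq> 0 \<and> degree P \<le> k \<and>
      \<bar>poly (map_poly of_int P) \<xi>\<bar> \<le> real_of_int (poly_height P) powr (-0)}"
    by (rule image_subsetI) (use mem in simp)
  moreover have "infinite (F ` {1..})" using inj by (simp add: finite_image_iff infinite_Ici)
  ultimately have "infinite {P::int poly. P \<noteq> 0 \<and> degree P \<le> k \<and>
      \<bar>poly (map_poly of_int P) \<xi>\<bar> \<le> real_of_int (poly_height P) powr (-0)}"
    by (rule infinite_super)
  then show ?thesis unfolding OmSet_def by simp
qed

lemma f_gt: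
  fixes y \<omega> :: real and k n :: nat
  assumes "0 < y" "0 < \<omega>" "\<omega> * (1 - y * (real k - 1)) > real n - real k + y * real n" "1 \<le> k" "1 \<le> n"
  shows "y < (\<omega> - real n + real k) / ((real k - 1) * \<omega> + real n)" "real n - real k < \<omega>"
proof -
  have den: "(real k - 1) * \<omega> + real n > 0"
  proof -
    have "(real k - 1) * \<omega> \<ge> 0" using assms by simp
    moreover have "real n \<ge> 0" by simp
    moreover have "real n > 0" using assms by simp
    ultimately show ?thesis by linarith
  qed
  have "y * ((real k - 1) * \<omega> + real n) < \<omega> - real n + real k"
    using assms(3) by (simp add: algebra_simps)
  then show "y < (\<omega> - real n + real k) / ((real k - 1) * \<omega> + real n)"
    using den by (simp add: pos_less_divide_eq)
  have "y * ((real k - 1) * \<omega> + real n) > 0" using den assms by simp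
  then show "real n - real k < \<omega>" using \<open>y * _ < _\<close> by linarith
qed

theorem mainTheorem2:
  fixes \<xi> :: real and k n :: nat
  assumes "\<not> algebraic \<xi>" and "2 \<le> k" and "k \<le> n"
  shows "(omega_exp k \<xi> \<noteq> \<infinity> \<longrightarrow>
           lambda_exp n \<xi> \<ge> ereal ((real_of_ereal (omega_exp k \<xi>) - real n + real k) /
                                  ((real k - 1) * real_of_ereal (omega_exp k \<xi>) + real n)))
       \<and> (omega_exp k \<xi> = \<infinity> \<longrightarrow> lambda_exp n \<xi> \<ge> ereal (1 / (real k - 1)))"
proof -
  have k1: "1 \<le> k" and n1: "1 \<le> n" and kn: "k \<le> n" using assms by auto
  have omeq: "omega_exp k \<xi> = Sup (ereal ` OmSet k \<xi>)" unfolding omega_exp_def OmSet_def by simp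
  have lameq: "lambda_exp n \<xi> = Sup (ereal ` LamSet n \<xi>)" unfolding lambda_exp_def LamSet_def by simp
  have lamge: "ereal l \<le> lambda_exp n \<xi>" if "l \<in> LamSet n \<xi>" for l
    unfolding lameq using that by (intro Sup_upper) auto
  have lam_nonpos: "ereal l \<le> lambda_exp n \<xi>" if "l \<le> 0" for l
    using lamge lam_down[OF lam0[OF n1] that] by blast
  have keyS: "ereal ((\<omega> - real n + real k) / ((real k - 1) * \<omega> + real n)) \<le> lambda_exp n \<xi>"
    if om: "\<omega> \<in> OmSet k \<xi>" "real n - real k < \<omega>" for \<omega>
  proof (rule ereal_le_from_below)
    fix y assume y: "y < (\<omega> - real n + real k) / ((real k - 1) * \<omega> + real n)"
    show "ereal y \<le> lambda_exp n \<xi>"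
    proof (cases "y \<le> 0")
      case True then show ?thesis by (rule lam_nonpos)
    next
      case False
      have "y \<in> LamSet n \<xi>" unfolding LamSet_def
        using key[OF assms(1) k1 kn om(2) _ _ y] om(1) False unfolding OmSet_def by simp
      then show ?thesis by (rule lamge)
    qed
  qed
  have omlt: "\<omega> \<in> OmSet k \<xi>" if "ereal \<omega> < omega_exp k \<xi>" for \<omega>
  proof -
    have "\<exists>x\<in>ereal ` OmSet k \<xi>. ereal \<omega> < x" using that unfolding omeq by (simp only: less_Sup_iff)
    then obtain s where "s \<in> OmSet k \<xi>" "ereal \<omega> < ereal s" by blast
    then show ?thesis using om_down by force
  qed
  have W0: "0 \<le> omega_exp k \<xi>"
    unfolding omeq using om0[OF k1, of \<xi>] by (metis Sup_upper image_eqI zero_ereal_def)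
  have main: "ereal y \<le> lambda_exp n \<xi>"
    if "0 < y" "0 < \<omega>" "\<omega> * (1 - y * (real k - 1)) > real n - real k + y * real n"
       "ereal \<omega> < omega_exp k \<xi>" for y \<omega>
  proof -
    have f: "y < (\<omega> - real n + real k) / ((real k - 1) * \<omega> + real n)" "real n - real k < \<omega>"
      using f_gt[OF that(1-3) k1 n1] by auto
    have "ereal y \<le> ereal ((\<omega> - real n + real k) / ((real k - 1) * \<omega> + real n))" using f(1) by simp
    also have "\<dots> \<le> lambda_exp n \<xi>" using keyS[OF omlt[OF that(4)] f(2)] .
    finally show ?thesis .
  qed
  have part1: "ereal ((real_of_ereal (omega_exp k \<xi>) - real n + real k) /
        ((real k - 1) * real_of_ereal (omega_exp k \<xi>) + real n)) \<le> lambda_exp n \<xi>"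
    if fin: "omega_exp k \<xi> \<noteq> \<infinity>"
  proof -
    obtain w where W: "omega_exp k \<xi> = ereal w" using fin W0 by (cases "omega_exp k \<xi>") auto
    have w0: "w \<ge> 0" using W0 W by simp
    show ?thesis unfolding W real_of_ereal.simps
    proof (rule ereal_le_from_below)
      fix y assume y: "y < (w - real n + real k) / ((real k - 1) * w + real n)"
      show "ereal y \<le> lambda_exp n \<xi>"
      proof (cases "y \<le> 0")
        case True then show ?thesis by (rule lam_nonpos)
      next
        case False
        define s where "s = 1 - y * (real k - 1)"
        define C0 where "C0 = real n - real k + y * real n"
        have den: "(real k - 1) * w + real n > 0" using w0 k1 n1 by (simp add: add_nonneg_pos)
        have "y * ((real k - 1) * w + real n) < w - real n + real k"
          using y den by (simp add: pos_less_divide_eq)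
        then have ws: "w * s > C0" unfolding s_def C0_def by (simp add: algebra_simps)
        have C0: "C0 > 0"
        proof -
          have "y * real n > 0" using False n1 by simp
          moreover have "real n - real k \<ge> 0" using kn by simp
          ultimately show ?thesis unfolding C0_def by linarith
        qed
        have s0: "s > 0"
        proof (rule ccontr)
          assume "\<not> s > 0"
          then have "w * s \<le> 0" using w0 by (simp add: mult_nonneg_nonpos)
          then show False using ws C0 by linarith
        qed
        define \<omega> where "\<omega> = w - (w * s - C0) / (2 * s)"
        have oms: "\<omega> * s = (w * s + C0) / 2" unfolding \<omega>_def using s0 by (simp add: field_simps)
        have "\<omega> * s > C0" using oms ws by simp
        moreover have "\<omega> < w" unfolding \<omega>_def using ws s0 by simp
        moreover have "\<omega> > 0"
        proof -
          have "\<omega> * s > 0" using \<open>\<omega> * s > C0\<close> C0 by simp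
          then show ?thesis using s0 by (simp add: zero_less_mult_iff)
        qed
        ultimately show ?thesis using main[of y \<omega>] False W unfolding s_def C0_def by simp
      qed
    qed
  qed
  have part2: "ereal (1 / (real k - 1)) \<le> lambda_exp n \<xi>" if inf: "omega_exp k \<xi> = \<infinity>"
  proof (rule ereal_le_from_below)
    fix y assume y: "y < 1 / (real k - 1)"
    show "ereal y \<le> lambda_exp n \<xi>"
    proof (cases "y \<le> 0")
      case True then show ?thesis by (rule lam_nonpos)
    next
      case False
      define s where "s = 1 - y * (real k - 1)"
      define C0 where "C0 = real n - real k + y * real n"
      have k1': "real k - 1 > 0" using assms(2) by simp
      have s0: "s > 0" unfolding s_def using y k1' by (simp add: pos_less_divide_eq mult.commute)
      have C0: "C0 \<ge> 0"
      proof -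
        have "y * real n \<ge> 0" using False by simp
        moreover have "real n - real k \<ge> 0" using kn by simp
        ultimately show ?thesis unfolding C0_def by linarith
      qed
      define \<omega> where "\<omega> = (C0 + 1) / s"
      have "\<omega> * s > C0" unfolding \<omega>_def using s0 by simp
      moreover have "\<omega> > 0" unfolding \<omega>_def using s0 C0 by simp
      ultimately show ?thesis using main[of y \<omega>] False inf unfolding s_def C0_def by simp
    qed
  qed
  show ?thesis using part1 part2 by blast
qed

end
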